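(* For an integer $\ell\ge 2$, let $G_\ell$ be the graph obtained from the disjoint union of $\ell$ copies of $K_3$ by adding one new vertex adjacent to all $3\ell$ vertices of these copies. Then $G_\ell$ is planar and $\dim_l(G_\ell)=2\ell$. Consequently, there exist connected planar graphs $G$ with $\dim_l(G)>\left\lceil \frac{n(G)+1}{2}\right\rceil$.
   Context: All graphs are finite and simple; $n(G)$ is the number of vertices. For vertices $x,y$ of a connected graph $G$, $d_G(x,y)$ is the length of a shortest $x,y$-path. A vertex $w$ distinguishes vertices $u,v$ if $d_G(u,w)\neq d_G(v,w)$. A set $W\subseteq V(G)$ is a local resolving set of $G$ if for every pair of adjacent vertices $u,v\in V(G)\setminus W$ some vertex of $W$ distinguishes $u$ and $v$. The local metric dimension $\dim_l(G)$ is the minimum cardinality of a local resolving set of $G$. *)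

theory Defs
  imports "HOL-Analysis.Analysis"
begin

definition simple_graph :: "'a set \<Rightarrow> ('a \<Rightarrow> 'a \<Rightarrow> bool) \<Rightarrow> bool" where
  "simple_graph V E \<longleftrightarrow> finite V \<and> (\<forall>u v. E u v \<longrightarrow> u \<in> V \<and> v \<in> V)
     \<and> (\<forall>u v. E u v \<longrightarrow> E v u) \<and> (\<forall>u. \<not> E u u)"

definition is_walk :: "'a set \<Rightarrow> ('a \<Rightarrow> 'a \<Rightarrow> bool) \<Rightarrow> 'a list \<Rightarrow> bool" where
  "is_walk V E xs \<longleftrightarrow> xs \<noteq> [] \<and> set xs \<subseteq> V \<and> (\<forall>i. Suc i < length xs \<longrightarrow> E (xs ! i) (xs ! Suc i))"

definition connected_graph :: "'a set \<Rightarrow> ('a \<Rightarrow> 'a \<Rightarrow> bool) \<Rightarrow> bool" where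
  "connected_graph V E \<longleftrightarrow> V \<noteq> {} \<and>
     (\<forall>u\<in>V. \<forall>v\<in>V. \<exists>xs. is_walk V E xs \<and> hd xs = u \<and> last xs = v)"

definition gdist :: "'a set \<Rightarrow> ('a \<Rightarrow> 'a \<Rightarrow> bool) \<Rightarrow> 'a \<Rightarrow> 'a \<Rightarrow> nat" where
  "gdist V E u v = (LEAST n. \<exists>xs. is_walk V E xs \<and> hd xs = u \<and> last xs = v \<and> length xs = Suc n)"

definition local_resolving_set :: "'a set \<Rightarrow> ('a \<Rightarrow> 'a \<Rightarrow> bool) \<Rightarrow> 'a set \<Rightarrow> bool" where
  "local_resolving_set V E W \<longleftrightarrow> W \<subseteq> V \<and>
     (\<forall>u v. u \<in> V - W \<longrightarrow> v \<in> V - W \<longrightarrow> E u v \<longrightarrow>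
        (\<exists>w\<in>W. gdist V E u w \<noteq> gdist V E v w))"

definition local_metric_dim :: "'a set \<Rightarrow> ('a \<Rightarrow> 'a \<Rightarrow> bool) \<Rightarrow> nat" where
  "local_metric_dim V E = Min {card W | W. local_resolving_set V E W}"

definition planar_graph :: "'a set \<Rightarrow> ('a \<Rightarrow> 'a \<Rightarrow> bool) \<Rightarrow> bool" where
  "planar_graph V E \<longleftrightarrow> (\<exists>(pos :: 'a \<Rightarrow> complex) (c :: 'a \<Rightarrow> 'a \<Rightarrow> real \<Rightarrow> complex).
     inj_on pos V \<and>
     (\<forall>u v. E u v \<longrightarrow> arc (c u v) \<and> pathstart (c u v) = pos u \<and> pathfinish (c u v) = pos v \<and>
         (\<forall>w\<in>V. pos w \<in> path_image (c u v) \<longrightarrow> w = u \<or> w = v)) \<and>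
     (\<forall>u v x y. E u v \<longrightarrow> E x y \<longrightarrow> {u, v} \<noteq> {x, y} \<longrightarrow>
         path_image (c u v) \<inter> path_image (c x y) \<subseteq> pos ` ({u, v} \<inter> {x, y})))"

text \<open>The graph G_l: copies Some (i, j), i < l, j < 3, of K_3 plus a center None.\<close>
definition Gl_V :: "nat \<Rightarrow> (nat \<times> nat) option set" where
  "Gl_V l = insert None {Some (i, j) | i j. i < l \<and> j < 3}"

fun Gl_E :: "nat \<Rightarrow> (nat \<times> nat) option \<Rightarrow> (nat \<times> nat) option \<Rightarrow> bool" where
  "Gl_E l None None = False"
| "Gl_E l None (Some (i, j)) = (i < l \<and> j < 3)"
| "Gl_E l (Some (i, j)) None = (i < l \<and> j < 3)"
| "Gl_E l (Some (i, j)) (Some (i', j')) = (i < l \<and> j < 3 \<and> i' = i \<and> j' < 3 \<and> j \<noteq> j')"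

end

theory Submission imports Defs begin

definition aff :: "real \<Rightarrow> real \<Rightarrow> real \<Rightarrow> complex \<Rightarrow> real" where
  "aff a b c z = a * Re z + b * Im z + c"

lemma seg_aff:
  assumes "z \<in> closed_segment p q"
  shows "\<exists>u. 0 \<le> u \<and> u \<le> 1 \<and> aff a b c z = (1-u) * aff a b c p + u * aff a b c q \<and> (u = 0 \<longrightarrow> z = p) \<and> (u = 1 \<longrightarrow> z = q)"
proof -
  obtain u where u: "0 \<le> u" "u \<le> 1" "z = (1-u) *\<^sub>R p + u *\<^sub>R q"
    using assms by (auto simp: closed_segment_def)
  have r: "Re z = (1-u) * Re p + u * Re q" "Im z = (1-u) * Im p + u * Im q"
    unfolding u(3) by simp_all
  have e: "\<And>x y X Y. a * ((1-u) * x + u * X) + b * ((1-u) * y + u * Y) + c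
      = (1-u) * (a * x + b * y + c) + u * (a * X + b * Y + c)"
    by (simp add: algebra_simps)
  have "aff a b c z = (1-u) * aff a b c p + u * aff a b c q"
    unfolding aff_def r by (rule e)
  moreover have "u = 0 \<longrightarrow> z = p" "u = 1 \<longrightarrow> z = q" using u(3) by simp_all
  ultimately show ?thesis using u(1,2) by blast
qed


lemma master:
  assumes z1: "z \<in> closed_segment p q" and z2: "z \<in> closed_segment r s"
    and "aff a b c p \<le> 0" "aff a b c q \<le> 0" "aff a b c r \<ge> 0" "aff a b c s \<ge> 0"
    and "aff a b c p \<noteq> 0 \<or> aff a b c q \<noteq> 0" "aff a b c r \<noteq> 0 \<or> aff a b c s \<noteq> 0"
  shows "z \<in> {p, q} \<inter> {r, s}"
proof -
  obtain u where u: "0 \<le> u" "u \<le> 1" "aff a b c z = (1-u) * aff a b c p + u * aff a b c q"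
     "u = 0 \<longrightarrow> z = p" "u = 1 \<longrightarrow> z = q"
    using seg_aff[OF z1] by blast
  obtain v where v: "0 \<le> v" "v \<le> 1" "aff a b c z = (1-v) * aff a b c r + v * aff a b c s"
     "v = 0 \<longrightarrow> z = r" "v = 1 \<longrightarrow> z = s"
    using seg_aff[OF z2] by blast
  have A: "(1-u) * aff a b c p \<le> 0" "u * aff a b c q \<le> 0"
    using assms u by (auto intro: mult_nonneg_nonpos)
  have B: "(1-v) * aff a b c r \<ge> 0" "v * aff a b c s \<ge> 0"
    using assms v by auto
  have z0: "(1-u) * aff a b c p = 0" "u * aff a b c q = 0"
    using A B u(3) v(3) by linarith+
  have z0': "(1-v) * aff a b c r = 0" "v * aff a b c s = 0"
    using A B u(3) v(3) by linarith+
  have "z = p \<and> aff a b c p = 0 \<or> z = q \<and> aff a b c q = 0"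
  proof (cases "u = 0 \<or> u = 1")
    case True
    then show ?thesis using z0 u by auto
  next
    case False
    then have "1 - u \<noteq> 0" "u \<noteq> 0" by auto
    then show ?thesis using z0 assms(7) by simp
  qed
  moreover have "z = r \<and> aff a b c r = 0 \<or> z = s \<and> aff a b c s = 0"
  proof (cases "v = 0 \<or> v = 1")
    case True
    then show ?thesis using z0' v by auto
  next
    case False
    then have "1 - v \<noteq> 0" "v \<noteq> 0" by auto
    then show ?thesis using z0' assms(8) by simp
  qed
  ultimately show ?thesis by auto
qed

fun pos :: "(nat \<times> nat) option \<Rightarrow> complex" where
  "pos None = 0"
| "pos (Some (i, j)) = (if j = 0 then Complex 1 (4 * real i + 1) else if j = 1 then Complex 2 (8 * real i)
      else Complex 2 (8 * real i + 4))"

definition ok :: "complex \<Rightarrow> complex \<Rightarrow> complex \<Rightarrow> complex \<Rightarrow> bool" where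
  "ok A B C D \<longleftrightarrow> closed_segment A B \<inter> closed_segment C D \<subseteq> {A, B} \<inter> {C, D}"

lemma ok_sym: "ok A B C D \<Longrightarrow> ok B A C D" "ok A B C D \<Longrightarrow> ok A B D C" "ok A B C D \<Longrightarrow> ok C D A B"
  unfolding ok_def by (auto simp: closed_segment_commute)

lemma okI:
  assumes "aff a b c A \<le> 0" "aff a b c B \<le> 0" "aff a b c C \<ge> 0" "aff a b c D \<ge> 0"
    "aff a b c A \<noteq> 0 \<or> aff a b c B \<noteq> 0" "aff a b c C \<noteq> 0 \<or> aff a b c D \<noteq> 0"
  shows "ok A B C D"
  unfolding ok_def using master[OF _ _ assms] by blast

context fixes i :: nat begin
abbreviation "PP \<equiv> Complex 1 (4 * real i + 1)"
abbreviation "QQ \<equiv> Complex 2 (8 * real i)"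
abbreviation "RR \<equiv> Complex 2 (8 * real i + 4)"

lemma k1: "ok 0 QQ 0 PP" by (rule okI[of "-(4*real i+1/2)" 1 0]) (auto simp: aff_def algebra_simps)
lemma k2: "ok 0 PP 0 RR" by (rule okI[of "-(4*real i+3/2)" 1 0]) (auto simp: aff_def algebra_simps)
lemma k3: "ok 0 QQ 0 RR" by (rule okI[of "-(4*real i+1)" 1 0]) (auto simp: aff_def algebra_simps)
lemma k4: "ok PP QQ PP RR" by (rule okI[of "-(4*real i+1)" 1 0]) (auto simp: aff_def algebra_simps)
lemma k5: "ok PP 0 PP QQ" by (rule okI[of 1 0 "-1"]) (auto simp: aff_def algebra_simps)
lemma k6: "ok PP 0 PP RR" by (rule okI[of 1 0 "-1"]) (auto simp: aff_def algebra_simps)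
lemma k7: "ok QQ PP QQ RR" by (rule okI[of 2 1 "-4-8*real i"]) (auto simp: aff_def algebra_simps)
lemma k8: "ok QQ 0 QQ PP" by (rule okI[of "1/2-4*real i" 1 "-1"]) (auto simp: aff_def algebra_simps)
lemma k9: "ok QQ 0 QQ RR" by (rule okI[of "1/2-4*real i" 1 "-1"]) (auto simp: aff_def algebra_simps)
lemma k10: "ok RR QQ RR PP" by (rule okI[of "-(4*real i+4)" 1 4]) (auto simp: aff_def algebra_simps)
lemma k11: "ok RR 0 RR PP" by (rule okI[of "4*real i+5/2" "-1" "-1"]) (auto simp: aff_def algebra_simps)
lemma k12: "ok RR 0 RR QQ" by (rule okI[of "4*real i+5/2" "-1" "-1"]) (auto simp: aff_def algebra_simps)
lemma k13: "ok 0 PP QQ RR" by (rule okI[of 1 0 "-3/2"]) (auto simp: aff_def algebra_simps)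
lemma k14: "ok 0 QQ PP RR" by (rule okI[of "-(4*real i+1/2)" 1 0]) (auto simp: aff_def algebra_simps)
lemma k15: "ok 0 RR PP QQ" by (rule okI[of "4*real i+3/2" "-1" 0]) (auto simp: aff_def algebra_simps)
end

lemmas kall = k1 k2 k3 k4 k5 k6 k7 k8 k9 k10 k11 k12 k13 k14 k15

lemma kall_sym:
  assumes "ok A B C D"
  shows "ok A B C D" "ok B A C D" "ok A B D C" "ok B A D C" "ok C D A B" "ok D C A B" "ok C D B A" "ok D C B A"
  using assms ok_sym by metis+

lemmas kfull = kall_sym[OF k1] kall_sym[OF k2] kall_sym[OF k3] kall_sym[OF k4] kall_sym[OF k5]
  kall_sym[OF k6] kall_sym[OF k7] kall_sym[OF k8] kall_sym[OF k9] kall_sym[OF k10]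
  kall_sym[OF k11] kall_sym[OF k12] kall_sym[OF k13] kall_sym[OF k14] kall_sym[OF k15]

lemma K4:
  assumes "u \<in> {None, Some (i,0), Some (i,1), Some (i,2)}" "v \<in> {None, Some (i,0), Some (i,1), Some (i,2)}"
    "x \<in> {None, Some (i,0), Some (i,1), Some (i,2)}" "y \<in> {None, Some (i,0), Some (i,1), Some (i,2)}"
    "u \<noteq> v" "x \<noteq> y" "{u, v} \<noteq> {x, y}"
  shows "ok (pos u) (pos v) (pos x) (pos y)"
  using assms apply -
  apply (elim insertE emptyE)
  apply (simp_all add: kfull doubleton_eq_iff)
  done


abbreviation NN :: "nat \<Rightarrow> (nat \<times> nat) option set" where
  "NN i \<equiv> {None, Some (i,0), Some (i,1), Some (i,2)}"

lemma cone_lo: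
  assumes "w \<in> NN i"
  shows "aff (-(4*real i+3)) 1 0 (pos w) \<le> 0 \<and> (w \<noteq> None \<longrightarrow> aff (-(4*real i+3)) 1 0 (pos w) \<noteq> 0)"
  using assms by (auto simp: aff_def algebra_simps)

lemma cone_hi:
  assumes "w \<in> NN i'" "i < i'"
  shows "aff (-(4*real i+3)) 1 0 (pos w) \<ge> 0 \<and> (w \<noteq> None \<longrightarrow> aff (-(4*real i+3)) 1 0 (pos w) \<noteq> 0)"
proof -
  have "real i + 1 \<le> real i'" using assms(2) by simp
  then show ?thesis using assms(1) by (auto simp: aff_def algebra_simps)
qed

lemma cone:
  assumes "u \<in> NN i" "v \<in> NN i" "x \<in> NN i'" "y \<in> NN i'" "u \<noteq> v" "x \<noteq> y" "i < i'"
  shows "ok (pos u) (pos v) (pos x) (pos y)"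
proof -
  have "u \<noteq> None \<or> v \<noteq> None" "x \<noteq> None \<or> y \<noteq> None" using assms(5,6) by metis+
  then show ?thesis
    using cone_lo[OF assms(1)] cone_lo[OF assms(2)] cone_hi[OF assms(3,7)] cone_hi[OF assms(4,7)]
    by (intro okI[of "-(4*real i+3)" 1 0]) blast+
qed

lemma Gl_E_iff: "Gl_E l u v \<longleftrightarrow>
   (u = None \<and> (\<exists>i j. v = Some (i,j) \<and> i < l \<and> j < 3)) \<or>
   (v = None \<and> (\<exists>i j. u = Some (i,j) \<and> i < l \<and> j < 3)) \<or>
   (\<exists>i j j'. u = Some (i,j) \<and> v = Some (i,j') \<and> i < l \<and> j < 3 \<and> j' < 3 \<and> j \<noteq> j')"
  by (cases "(l,u,v)" rule: Gl_E.cases) auto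

lemma lt3: "(j::nat) < 3 \<longleftrightarrow> j = 0 \<or> j = 1 \<or> j = 2" by auto

lemma Gl_V_eq: "Gl_V l = insert None (Some ` ({..<l} \<times> {..<3}))"
  unfolding Gl_V_def by auto

lemma mem_Gl_V[simp]: "None \<in> Gl_V l" "Some (i,j) \<in> Gl_V l \<longleftrightarrow> i < l \<and> j < 3"
  unfolding Gl_V_def by auto

lemma edge_in:
  assumes "Gl_E l u v"
  shows "\<exists>i<l. u \<in> NN i \<and> v \<in> NN i \<and> u \<noteq> v \<and> u \<in> Gl_V l \<and> v \<in> Gl_V l"
  using assms unfolding Gl_E_iff lt3 by auto

lemma eight: "8 * real a \<noteq> 8 * real b + 4"
proof
  assume "8 * real a = 8 * real b + 4"
  then have "real (8*a) = real (8*b+4)" by simp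
  then have "8*a = 8*b+4" using of_nat_eq_iff by blast
  then show False by presburger
qed

lemma pos_inj: "inj_on pos (Gl_V l)"
proof (rule inj_onI)
  fix u v assume u: "u \<in> Gl_V l" and v: "v \<in> Gl_V l" and e: "pos u = pos v"
  show "u = v"
  proof (cases u)
    case None
    then show ?thesis using v e unfolding Gl_V_eq by (auto simp: complex_eq_iff split: if_splits)
  next
    case (Some a)
    then obtain i j where a: "u = Some (i,j)" "j < 3" using u unfolding Gl_V_eq by auto
    show ?thesis
    proof (cases v)
      case None
      then show ?thesis using a e by (auto simp: complex_eq_iff split: if_splits)
    next
      case (Some b)
      then obtain i' j' where b: "v = Some (i',j')" "j' < 3" using v unfolding Gl_V_eq by auto
      show ?thesis using a b e eight[of i i'] eight[of i' i] by (auto simp: complex_eq_iff split: if_splits)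
    qed
  qed
qed

lemma ok_image:
  assumes "ok (pos u) (pos v) (pos x) (pos y)" "u \<in> Gl_V l" "v \<in> Gl_V l" "x \<in> Gl_V l" "y \<in> Gl_V l"
  shows "closed_segment (pos u) (pos v) \<inter> closed_segment (pos x) (pos y) \<subseteq> pos ` ({u,v} \<inter> {x,y})"
proof -
  have "pos ` ({u,v} \<inter> {x,y}) = pos ` {u,v} \<inter> pos ` {x,y}"
    by (rule inj_on_image_Int[OF pos_inj]) (use assms in auto)
  then show ?thesis using assms(1) unfolding ok_def by simp
qed

lemma inter:
  assumes "Gl_E l u v" "Gl_E l x y" "{u,v} \<noteq> {x,y}"
  shows "closed_segment (pos u) (pos v) \<inter> closed_segment (pos x) (pos y) \<subseteq> pos ` ({u,v} \<inter> {x,y})"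
proof -
  obtain i where i: "u \<in> NN i" "v \<in> NN i" "u \<noteq> v" "u \<in> Gl_V l" "v \<in> Gl_V l" using edge_in[OF assms(1)] by blast
  obtain i' where i': "x \<in> NN i'" "y \<in> NN i'" "x \<noteq> y" "x \<in> Gl_V l" "y \<in> Gl_V l" using edge_in[OF assms(2)] by blast
  have "ok (pos u) (pos v) (pos x) (pos y)"
  proof (cases "i = i'")
    case True
    then show ?thesis using K4[of u i v x y] i i' assms(3) by blast
  next
    case False
    then show ?thesis
    proof (cases "i < i'")
      case True
      then show ?thesis using cone[of u i v x i' y] i i' by blast
    next
      case False
      then have "i' < i" using \<open>i \<noteq> i'\<close> by simp
      then show ?thesis using cone[of x i' y u i v] i i' ok_sym(3) by blast
    qed
  qed
  then show ?thesis using ok_image i i' by blast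
qed

lemma other_nb:
  assumes "w \<in> Gl_V l" "l \<ge> 1" "w \<noteq> u" "w \<noteq> v"
  shows "\<exists>x. Gl_E l w x \<and> x \<noteq> u \<and> x \<noteq> v"
proof (cases w)
  case None
  have "Gl_E l w (Some (0,0))" "Gl_E l w (Some (0,1))" "Gl_E l w (Some (0,2))" using None assms(2) by auto
  moreover have "Some (0::nat,0::nat) \<noteq> Some (0,1)" "Some (0::nat,0::nat) \<noteq> Some (0,2)"
    "Some (0::nat,1::nat) \<noteq> Some (0,2)" by simp_all
  ultimately show ?thesis by blast
next
  case (Some a)
  then obtain i j where a: "w = Some (i,j)" "i < l" "j < 3" using assms(1) unfolding Gl_V_eq by auto
  have m: "(j+1) mod 3 \<noteq> j" "(j+2) mod 3 \<noteq> j" by presburger+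
  have "Gl_E l w None" "Gl_E l w (Some (i, (j+1) mod 3))" "Gl_E l w (Some (i, (j+2) mod 3))"
    using a m by auto
  moreover have "(j+1) mod 3 \<noteq> (j+2) mod 3" by presburger
  then have "Some (i, (j+1) mod 3) \<noteq> Some (i, (j+2) mod 3)" by simp
  moreover have "None \<noteq> Some (i, (j+1) mod 3)" "None \<noteq> Some (i, (j+2) mod 3)" by simp_all
  ultimately show ?thesis by blast
qed

lemma planar:
  assumes "l \<ge> 1"
  shows "planar_graph (Gl_V l) (Gl_E l)"
  unfolding planar_graph_def
proof (intro exI conjI allI impI ballI)
  show "inj_on pos (Gl_V l)" by (rule pos_inj)
  fix u v assume e: "Gl_E l u v"
  then obtain i where i: "u \<noteq> v" "u \<in> Gl_V l" "v \<in> Gl_V l" using edge_in by blast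
  then have "pos u \<noteq> pos v" using pos_inj unfolding inj_on_def by blast
  then show "arc (linepath (pos u) (pos v))" by (rule arc_linepath)
  show "pathstart (linepath (pos u) (pos v)) = pos u" by simp
  show "pathfinish (linepath (pos u) (pos v)) = pos v" by simp
  fix w assume w: "w \<in> Gl_V l" "pos w \<in> path_image (linepath (pos u) (pos v))"
  show "w = u \<or> w = v"
  proof (rule ccontr)
    assume "\<not> (w = u \<or> w = v)"
    then obtain x where x: "Gl_E l w x" "x \<noteq> u" "x \<noteq> v" using other_nb[OF w(1) assms] by blast
    have ne: "{w,x} \<noteq> {u,v}" using x \<open>\<not> (w = u \<or> w = v)\<close> by (auto simp: doubleton_eq_iff)
    have "pos w \<in> closed_segment (pos w) (pos x) \<inter> closed_segment (pos u) (pos v)" using w by simp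
    then have "pos w \<in> pos ` ({w,x} \<inter> {u,v})" using inter[OF x(1) e ne] by blast
    moreover have "{w,x} \<inter> {u,v} = {}" using x \<open>\<not> (w = u \<or> w = v)\<close> by auto
    ultimately show False by simp
  qed
next
  fix u v x y assume "Gl_E l u v" "Gl_E l x y" "{u,v} \<noteq> {x,y}"
  then show "path_image (linepath (pos u) (pos v)) \<inter> path_image (linepath (pos x) (pos y)) \<subseteq> pos ` ({u,v} \<inter> {x,y})"
    using inter by simp
qed


section \<open>Distances\<close>

lemma gdist_le:
  assumes "is_walk V E xs" "hd xs = u" "last xs = v" "length xs = Suc n"
  shows "gdist V E u v \<le> n"
  unfolding gdist_def by (rule Least_le) (use assms in blast)

lemma gdist_ex:
  assumes "is_walk V E xs" "hd xs = u" "last xs = v"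
  shows "\<exists>ys. is_walk V E ys \<and> hd ys = u \<and> last ys = v \<and> length ys = Suc (gdist V E u v)"
proof -
  have "xs \<noteq> []" using assms(1) unfolding is_walk_def by blast
  then have "length xs = Suc (length xs - 1)" by simp
  then have "\<exists>n xs. is_walk V E xs \<and> hd xs = u \<and> last xs = v \<and> length xs = Suc n" using assms by blast
  then show ?thesis unfolding gdist_def by (rule LeastI_ex)
qed

lemma walk1: "u \<in> V \<Longrightarrow> is_walk V E [u]"
  unfolding is_walk_def by simp

lemma walk2: "u \<in> V \<Longrightarrow> v \<in> V \<Longrightarrow> E u v \<Longrightarrow> is_walk V E [u, v]"
  unfolding is_walk_def by (auto simp: less_Suc_eq)

lemma walk3: "u \<in> V \<Longrightarrow> v \<in> V \<Longrightarrow> w \<in> V \<Longrightarrow> E u w \<Longrightarrow> E w v \<Longrightarrow> is_walk V E [u, w, v]"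
  unfolding is_walk_def by (auto simp: less_Suc_eq nth_Cons split: nat.splits)

lemma gd0: "u \<in> V \<Longrightarrow> gdist V E u u = 0"
  using gdist_le[OF walk1[of u V E], of u u 0] by simp

lemma gd_ne0:
  assumes "is_walk V E xs" "hd xs = u" "last xs = v" "u \<noteq> v"
  shows "gdist V E u v \<noteq> 0"
proof
  assume "gdist V E u v = 0"
  then obtain ys where "hd ys = u" "last ys = v" "length ys = Suc 0" using gdist_ex[OF assms(1-3)] by auto
  then show False using assms(4) by (auto simp: length_Suc_conv)
qed

lemma gd1:
  assumes "u \<in> V" "v \<in> V" "E u v" "u \<noteq> v"
  shows "gdist V E u v = 1"
proof -
  have w: "is_walk V E [u,v]" using assms(1-3) by (rule walk2)
  have "gdist V E u v \<le> 1" using gdist_le[OF w] by simp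
  moreover have "gdist V E u v \<noteq> 0" using gd_ne0[OF w] assms(4) by simp
  ultimately show ?thesis by simp
qed

lemma gd2:
  assumes "u \<in> V" "v \<in> V" "w \<in> V" "E u w" "E w v" "u \<noteq> v" "\<not> E u v"
  shows "gdist V E u v = 2"
proof -
  have w: "is_walk V E [u,w,v]" using assms(1-5) by (rule walk3)
  have "gdist V E u v \<le> 2" using gdist_le[OF w] by simp
  moreover have "gdist V E u v \<noteq> 0" using gd_ne0[OF w] assms(6) by simp
  moreover have "gdist V E u v \<noteq> 1"
  proof
    assume "gdist V E u v = 1"
    have "\<exists>ys. is_walk V E ys \<and> hd ys = u \<and> last ys = v \<and> length ys = Suc (gdist V E u v)"
      using gdist_ex[OF w] by simp
    then obtain ys where ys: "is_walk V E ys" "hd ys = u" "last ys = v" "length ys = Suc (gdist V E u v)"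
      by blast
    then have "length ys = Suc (Suc 0)" using \<open>gdist V E u v = 1\<close> by simp
    then obtain a b where "ys = [a, b]" by (auto simp: length_Suc_conv)
    then show False using ys assms(7) unfolding is_walk_def by auto
  qed
  ultimately show ?thesis by linarith
qed

lemma nbNone:
  assumes "v \<in> Gl_V l" "v \<noteq> None"
  shows "Gl_E l None v" "Gl_E l v None"
proof -
  obtain i j where "v = Some (i,j)" "i < l" "j < 3" using assms unfolding Gl_V_eq by blast
  then show "Gl_E l None v" "Gl_E l v None" by simp_all
qed

lemma Gd:
  assumes "u \<in> Gl_V l" "v \<in> Gl_V l"
  shows "gdist (Gl_V l) (Gl_E l) u v = (if u = v then 0 else if Gl_E l u v then 1 else 2)"
proof (cases "u = v")
  case True then show ?thesis using gd0 assms by simp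
next
  case ne: False
  show ?thesis
  proof (cases "Gl_E l u v")
    case True then show ?thesis using gd1 assms ne by simp
  next
    case False
    have "u \<noteq> None"
    proof
      assume u0: "u = None"
      then have "v \<noteq> None" using ne by simp
      then have "Gl_E l None v" using nbNone(1)[OF assms(2)] by blast
      then show False using False u0 by simp
    qed
    moreover have "v \<noteq> None"
    proof
      assume v0: "v = None"
      then have "u \<noteq> None" using ne by simp
      then have "Gl_E l u None" using nbNone(2)[OF assms(1)] by blast
      then show False using False v0 by simp
    qed
    ultimately have "Gl_E l u None" "Gl_E l None v" using assms nbNone by blast+
    then show ?thesis using gd2[OF assms(1,2) mem_Gl_V(1)] False ne by simp
  qed
qed

section \<open>Local metric dimension\<close>

lemma same_nb:
  assumes "w \<in> Gl_V l" "w \<noteq> Some (i,j)" "w \<noteq> Some (i,j')" "i < l" "j < 3" "j' < 3"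
  shows "Gl_E l (Some (i,j)) w \<longleftrightarrow> Gl_E l (Some (i,j')) w"
proof (cases w)
  case None then show ?thesis using assms by simp
next
  case (Some a)
  then obtain b c where "w = Some (b,c)" by (cases a) auto
  then show ?thesis using assms by auto
qed

lemma lrs_pair:
  assumes W: "local_resolving_set (Gl_V l) (Gl_E l) W" and i: "i < l" and j: "j < 3" "j' < 3" "j \<noteq> j'"
  shows "Some (i,j) \<in> W \<or> Some (i,j') \<in> W"
proof (rule ccontr)
  assume "\<not> ?thesis"
  then have nw: "Some (i,j) \<in> Gl_V l - W" "Some (i,j') \<in> Gl_V l - W" using i j by auto
  have e: "Gl_E l (Some (i,j)) (Some (i,j'))" using i j by simp
  have "\<forall>u v. u \<in> Gl_V l - W \<longrightarrow> v \<in> Gl_V l - W \<longrightarrow> Gl_E l u v \<longrightarrow>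
        (\<exists>w\<in>W. gdist (Gl_V l) (Gl_E l) u w \<noteq> gdist (Gl_V l) (Gl_E l) v w)"
    using W unfolding local_resolving_set_def by blast
  then obtain w where w: "w \<in> W" "gdist (Gl_V l) (Gl_E l) (Some (i,j)) w \<noteq> gdist (Gl_V l) (Gl_E l) (Some (i,j')) w"
    using nw e by blast
  have wV: "w \<in> Gl_V l" using W w(1) unfolding local_resolving_set_def by blast
  have ne: "w \<noteq> Some (i,j)" "w \<noteq> Some (i,j')" using w(1) nw by auto
  have eq: "Gl_E l (Some (i,j)) w \<longleftrightarrow> Gl_E l (Some (i,j')) w" by (rule same_nb[OF wV ne i j(1,2)])
  have "gdist (Gl_V l) (Gl_E l) (Some (i,j)) w = (if Gl_E l (Some (i,j)) w then 1 else 2)"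
    using Gd[OF _ wV, of "Some (i,j)"] i j ne by simp
  moreover have "gdist (Gl_V l) (Gl_E l) (Some (i,j')) w = (if Gl_E l (Some (i,j')) w then 1 else 2)"
    using Gd[OF _ wV, of "Some (i,j')"] i j ne by simp
  ultimately show False using w(2) eq by simp
qed

lemma finite_Gl_V: "finite (Gl_V l)"
  unfolding Gl_V_eq by simp

lemma lrs_card:
  assumes W: "local_resolving_set (Gl_V l) (Gl_E l) W"
  shows "2 * l \<le> card W"
proof -
  define T where "T i = W \<inter> {Some (i,0), Some (i,1), Some (i,2)}" for i
  have fW: "finite W" using W finite_Gl_V unfolding local_resolving_set_def by (auto intro: finite_subset)
  have fT: "finite (T i)" for i unfolding T_def by simp
  have sub: "2 \<le> card (T i)" if "a \<in> T i" "b \<in> T i" "a \<noteq> b" for a b i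
  proof -
    have "card {a,b} \<le> card (T i)" by (rule card_mono[OF fT]) (use that in blast)
    then show ?thesis using that(3) by simp
  qed
  have T2: "2 \<le> card (T i)" if "i < l" for i
  proof -
    have p1: "Some (i,0) \<in> W \<or> Some (i,1) \<in> W" by (rule lrs_pair[OF W that]) simp_all
    have p2: "Some (i,0) \<in> W \<or> Some (i,2) \<in> W" by (rule lrs_pair[OF W that]) simp_all
    have p3: "Some (i,1) \<in> W \<or> Some (i,2) \<in> W" by (rule lrs_pair[OF W that]) simp_all
    have m: "Some (i,0) \<in> W \<Longrightarrow> Some (i,0) \<in> T i" "Some (i,1) \<in> W \<Longrightarrow> Some (i,1) \<in> T i"
      "Some (i,2) \<in> W \<Longrightarrow> Some (i,2) \<in> T i" unfolding T_def by simp_all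
    have d: "Some (i,0::nat) \<noteq> Some (i,1)" "Some (i,0::nat) \<noteq> Some (i,2)" "Some (i,1::nat) \<noteq> Some (i,2)"
      by simp_all
    show ?thesis
    proof (cases "Some (i,0) \<in> W")
      case True
      show ?thesis
      proof (cases "Some (i,1) \<in> W")
        case True2: True
        show ?thesis by (rule sub[OF m(1)[OF True] m(2)[OF True2] d(1)])
      next
        case False
        then have "Some (i,2) \<in> W" using p3 by blast
        then show ?thesis by (rule sub[OF m(1)[OF True] m(3) d(2)])
      qed
    next
      case False
      then have "Some (i,1) \<in> W" "Some (i,2) \<in> W" using p1 p2 by blast+
      then show ?thesis by (rule sub[OF m(2) m(3) d(3)])
    qed
  qed
  have "card (\<Union>i\<in>{..<l}. T i) = (\<Sum>i\<in>{..<l}. card (T i))"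
    by (rule card_UN_disjoint) (auto simp: T_def)
  also have "\<dots> \<ge> (\<Sum>i\<in>{..<l}. 2)" by (rule sum_mono) (use T2 in auto)
  finally have "2 * l \<le> card (\<Union>i\<in>{..<l}. T i)" by simp
  also have "\<dots> \<le> card W" by (rule card_mono[OF fW]) (auto simp: T_def)
  finally show ?thesis .
qed

definition W0 :: "nat \<Rightarrow> (nat \<times> nat) option set" where
  "W0 l = Some ` ({..<l} \<times> {..<2})"

lemma card_W0: "card (W0 l) = 2 * l"
proof -
  have "card (W0 l) = card ({..<l} \<times> {..<2::nat})" unfolding W0_def by (rule card_image) simp
  also have "\<dots> = 2 * l" by (simp add: card_cartesian_product)
  finally show ?thesis .
qed

lemma lrs_W0:
  assumes "l \<ge> 2"
  shows "local_resolving_set (Gl_V l) (Gl_E l) (W0 l)"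
  unfolding local_resolving_set_def
proof (intro conjI allI impI)
  show "W0 l \<subseteq> Gl_V l" unfolding W0_def by auto
  fix u v assume u: "u \<in> Gl_V l - W0 l" and v: "v \<in> Gl_V l - W0 l" and e: "Gl_E l u v"
  have key: "\<exists>w\<in>W0 l. gdist (Gl_V l) (Gl_E l) None w \<noteq> gdist (Gl_V l) (Gl_E l) (Some (i,2)) w"
    if "i < l" for i
  proof -
    define i' where "i' = (if i = 0 then 1 else 0::nat)"
    have i': "i' < l" "i' \<noteq> i" using assms that unfolding i'_def by auto
    have "Some (i',0) \<in> W0 l" using i' unfolding W0_def by auto
    moreover have "gdist (Gl_V l) (Gl_E l) None (Some (i',0)) = 1" using Gd i' by simp
    moreover have "gdist (Gl_V l) (Gl_E l) (Some (i,2)) (Some (i',0)) = 2" using Gd i' that by simp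
    ultimately show ?thesis by force
  qed
  have nW: "Some (i,j) \<in> Gl_V l - W0 l \<Longrightarrow> j = 2" for i j unfolding W0_def by auto
  show "\<exists>w\<in>W0 l. gdist (Gl_V l) (Gl_E l) u w \<noteq> gdist (Gl_V l) (Gl_E l) v w"
  proof -
    from e consider (a) i j where "u = None" "v = Some (i,j)" "i < l" "j < 3"
      | (b) i j where "v = None" "u = Some (i,j)" "i < l" "j < 3"
      | (c) i j j' where "u = Some (i,j)" "v = Some (i,j')" "j \<noteq> j'"
      unfolding Gl_E_iff by blast
    then show ?thesis
    proof cases
      case (a i j)
      then show ?thesis using key nW v by auto
    next
      case (b i j)
      then have "j = 2" using nW u by simp
      then obtain w where "w \<in> W0 l" "gdist (Gl_V l) (Gl_E l) None w \<noteq> gdist (Gl_V l) (Gl_E l) (Some (i,2)) w"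
        using key b(3) by blast
      then show ?thesis using b \<open>j = 2\<close> by metis
    next
      case (c i j j')
      have "j = 2" using nW u c(1) by simp
      moreover have "j' = 2" using nW v c(2) by simp
      ultimately show ?thesis using c(3) by simp
    qed
  qed
qed

lemma lmd:
  assumes "l \<ge> 2"
  shows "local_metric_dim (Gl_V l) (Gl_E l) = 2 * l"
  unfolding local_metric_dim_def
proof (rule Min_eqI)
  have "{card W |W. local_resolving_set (Gl_V l) (Gl_E l) W} \<subseteq> {..card (Gl_V l)}"
    unfolding local_resolving_set_def using finite_Gl_V by (auto intro: card_mono)
  then show "finite {card W |W. local_resolving_set (Gl_V l) (Gl_E l) W}" by (rule finite_subset) simp
  show "\<And>y. y \<in> {card W |W. local_resolving_set (Gl_V l) (Gl_E l) W} \<Longrightarrow> 2 * l \<le> y"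
    using lrs_card by auto
  show "2 * l \<in> {card W |W. local_resolving_set (Gl_V l) (Gl_E l) W}"
    unfolding mem_Collect_eq by (intro exI[of _ "W0 l"]) (simp add: card_W0 lrs_W0[OF assms])
qed

lemma simple: "simple_graph (Gl_V l) (Gl_E l)"
  unfolding simple_graph_def
proof (intro conjI allI impI)
  show "finite (Gl_V l)" by (rule finite_Gl_V)
  fix u v assume "Gl_E l u v"
  then show "u \<in> Gl_V l" "v \<in> Gl_V l" "Gl_E l v u" unfolding Gl_E_iff by auto
next
  fix u show "\<not> Gl_E l u u" unfolding Gl_E_iff by auto
qed

lemma connected: "l \<ge> 1 \<Longrightarrow> connected_graph (Gl_V l) (Gl_E l)"
  unfolding connected_graph_def
proof (intro conjI ballI)
  show "Gl_V l \<noteq> {}" using mem_Gl_V(1) by blast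
  fix u v assume u: "u \<in> Gl_V l" and v: "v \<in> Gl_V l"
  show "\<exists>xs. is_walk (Gl_V l) (Gl_E l) xs \<and> hd xs = u \<and> last xs = v"
  proof (cases "u = v")
    case True then show ?thesis using walk1[OF u] by (intro exI[of _ "[u]"]) simp
  next
    case False
    show ?thesis
    proof (cases "Gl_E l u v")
      case True then show ?thesis using walk2[of u "Gl_V l" v "Gl_E l"] u v True by (intro exI[of _ "[u,v]"]) simp
    next
      case ne: False
      have "Gl_E l u None" "Gl_E l None v" using ne False u v unfolding Gl_V_eq Gl_E_iff by auto
      then show ?thesis using walk3[of u "Gl_V l" v None "Gl_E l"] u v by (intro exI[of _ "[u,None,v]"]) simp
    qed
  qed
qed

lemma card_G4: "card (Gl_V 4) = 13"
proof -
  have "card (Some ` ({..<4::nat} \<times> {..<3::nat})) = card ({..<4::nat} \<times> {..<3::nat})"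
    by (rule card_image) simp
  then have "card (Some ` ({..<4::nat} \<times> {..<3::nat})) = 12"
    by (simp add: card_cartesian_product)
  then show ?thesis unfolding Gl_V_eq by (subst card_insert_disjoint) auto
qed

theorem mainTheorem7:
  shows "(\<forall>l::nat. l \<ge> 2 \<longrightarrow>
            simple_graph (Gl_V l) (Gl_E l) \<and> planar_graph (Gl_V l) (Gl_E l) \<and>
            local_metric_dim (Gl_V l) (Gl_E l) = 2 * l)
       \<and> (\<exists>(V :: (nat \<times> nat) option set) E. simple_graph V E \<and> connected_graph V E \<and>
            planar_graph V E \<and> int (local_metric_dim V E) > \<lceil>(real (card V) + 1) / 2\<rceil>)"
proof (intro conjI allI impI)
  fix l :: nat assume "l \<ge> 2"
  then show "simple_graph (Gl_V l) (Gl_E l)" "planar_graph (Gl_V l) (Gl_E l)"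
    "local_metric_dim (Gl_V l) (Gl_E l) = 2 * l" using simple planar lmd by auto
next
  have "local_metric_dim (Gl_V 4) (Gl_E 4) = 8" using lmd[of 4] by simp
  then have "int (local_metric_dim (Gl_V 4) (Gl_E 4)) > \<lceil>(real (card (Gl_V 4)) + 1) / 2\<rceil>"
    using card_G4 by simp
  then show "\<exists>(V :: (nat \<times> nat) option set) E. simple_graph V E \<and> connected_graph V E \<and>
            planar_graph V E \<and> int (local_metric_dim V E) > \<lceil>(real (card V) + 1) / 2\<rceil>"
    using simple[of 4] connected[of 4] planar[of 4] by auto
qed

end
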